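(* Let $(\mathcal M_i,\phi_{ij})$ be an inverse system of local Moufang sets over a directed set $(I,\succcurlyeq)$, where $\mathcal M_i=(X_i,(U^{(i)}_x)_{x\in X_i})$. Let $L:=\{(x_i)_{i\in I}\in\prod_iX_i\mid x_i\phi_{ij}=x_j\text{ for all }i\succcurlyeq j\}$. Then for $(x_i),(y_i)\in L$, $x_i\sim y_i$ holds for some $i\in I$ iff it holds for all $i\in I$; declare $(x_i)\sim(y_i)$ in that case, an equivalence relation on $L$. For $x=(x_i)\in L$ let $U_x:=\{(u_i)\in\prod_iU^{(i)}_{x_i}\mid u_i\phi_{ij}=\phi_{ij}u_j\text{ for all }i\succcurlyeq j\}$, acting on $L$ componentwise. If $L$ has more than two $\sim$-classes, then $(L,(U_x)_{x\in L})$ is a local Moufang set, and together with the projections $p_j:L\to X_j$, $(x_i)\mapsto x_j$ (which are homomorphisms), it is an inverse limit of $(\mathcal M_i,\phi_{ij})$ in the category of local Moufang sets: $\phi_{ij}\circ p_i=p_j$ for $i\succcurlyeq j$, and for every local Moufang set $\mathcal M$ with homomorphisms $q_i:\mathcal M\to\mathcal M_i$ satisfying $\phi_{ij}\circ q_i=q_j$ there is a unique homomorphism $\psi:\mathcal M\to(L,(U_x))$ with $p_i\circ\psi=q_i$ for all $i$.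
   Context: Group actions are right actions; maps composed left to right ($u\phi$: first $u$, then $\phi$). For $(X,\sim)$, $\overline x$ is the class of $x$, $\overline X$ the set of classes, $\mathrm{Sym}(X,\sim)$ the bijections $g$ with $x\sim y\iff xg\sim yg$, $\overline U$ the induced group on $\overline X$. A local Moufang set is $(X,\sim)$ with $|\overline X|>2$ and subgroups $U_x\le\mathrm{Sym}(X,\sim)$ ($x\in X$) with: (LM0) $x\sim y\Rightarrow\overline{U_x}=\overline{U_y}$; (LM1) $U_x$ fixes $x$ and is sharply transitive on $X\setminus\overline x$; (LM1') $\overline{U_x}$ fixes $\overline x$ and is sharply transitive on $\overline X\setminus\{\overline x\}$; (LM2) $U_x^g=U_{xg}$ for all $x$ and all $g\in\langle U_y\rangle$, where $g^h=h^{-1}gh$. A homomorphism $(X,(U_x))\to(Y,(V_y))$ is a map $\phi:X\to Y$ with $x\sim x'\iff x\phi\sim x'\phi$ and $U_x\phi\subseteq\phi V_{x\phi}$ for all $x$. The category of local Moufang sets has these as objects and morphisms. A directed set is a nonempty partially ordered set in which any two elements have a common upper bound. An inverse system over $I$ consists of local Moufang sets $\mathcal M_i$ ($i\in I$) and homomorphisms $\phi_{ij}:\mathcal M_i\to\mathcal M_j$ for $i\succcurlyeq j$ with $\phi_{ii}=\mathrm{id}$ and $\phi_{jk}\circ\phi_{ij}=\phi_{ik}$ for $i\succcurlyeq j\succcurlyeq k$. *)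

theory Defs
  imports "HOL-Algebra.Bij" "HOL-Algebra.Generated_Groups" "HOL-Library.FuncSet"
begin

text \<open>Permutations of a set X are the extensional bijections
  Bij X of HOL-Algebra. The paper's right actions are written as function
  application: x u is written u x. Composition "first u, then v" is the function
  composition v o u (compose X v u); in BijGroup X the product g \<otimes> f is compose X g f.\<close>

definition more_than_two :: "'a set \<Rightarrow> bool" where
  "more_than_two S \<longleftrightarrow> (\<exists>a\<in>S. \<exists>b\<in>S. \<exists>c\<in>S. a \<noteq> b \<and> a \<noteq> c \<and> b \<noteq> c)"

definition SymR :: "'a set \<Rightarrow> ('a \<times> 'a) set \<Rightarrow> ('a \<Rightarrow> 'a) set" where
  "SymR X R = {g \<in> Bij X. \<forall>x\<in>X. \<forall>y\<in>X. (x, y) \<in> R \<longleftrightarrow> (g x, g y) \<in> R}"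

definition induced :: "'a set \<Rightarrow> ('a \<times> 'a) set \<Rightarrow> ('a \<Rightarrow> 'a) \<Rightarrow> ('a set \<Rightarrow> 'a set)" where
  "induced X R g = (\<lambda>C \<in> X // R. g ` C)"

definition local_moufang_set ::
  "'a set \<Rightarrow> ('a \<times> 'a) set \<Rightarrow> ('a \<Rightarrow> ('a \<Rightarrow> 'a) set) \<Rightarrow> bool" where
  "local_moufang_set X R U \<longleftrightarrow>
     equiv X R \<and> more_than_two (X // R) \<and>
     (\<forall>x\<in>X. subgroup (U x) (BijGroup X) \<and> U x \<subseteq> SymR X R) \<and>
     \<comment> \<open>(LM0)\<close>
     (\<forall>x\<in>X. \<forall>y\<in>X. (x, y) \<in> R \<longrightarrow> induced X R ` U x = induced X R ` U y) \<and>
     \<comment> \<open>(LM1)\<close>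
     (\<forall>x\<in>X. (\<forall>u\<in>U x. u x = x \<and> u ` (X - R `` {x}) = X - R `` {x}) \<and>
        (\<forall>y\<in>X - R `` {x}. \<forall>z\<in>X - R `` {x}. \<exists>!u. u \<in> U x \<and> u y = z)) \<and>
     \<comment> \<open>(LM1')\<close>
     (\<forall>x\<in>X. (\<forall>v\<in>induced X R ` U x. v (R `` {x}) = R `` {x} \<and>
                 v ` (X // R - {R `` {x}}) = X // R - {R `` {x}}) \<and>
        (\<forall>C\<in>X // R - {R `` {x}}. \<forall>D\<in>X // R - {R `` {x}}.
            \<exists>!v. v \<in> induced X R ` U x \<and> v C = D)) \<and>
     \<comment> \<open>(LM2): U_x^g = g^{-1} U_x g = U_{xg}; with functions: g o u o g^{-1}\<close>
     (\<forall>x\<in>X. \<forall>g\<in>generate (BijGroup X) (\<Union>y\<in>X. U y).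
        (\<lambda>u. g \<otimes>\<^bsub>BijGroup X\<^esub> u \<otimes>\<^bsub>BijGroup X\<^esub> inv\<^bsub>BijGroup X\<^esub> g) ` U x = U (g x))"

definition lms_hom ::
  "'a set \<Rightarrow> ('a \<times> 'a) set \<Rightarrow> ('a \<Rightarrow> ('a \<Rightarrow> 'a) set) \<Rightarrow>
   'b set \<Rightarrow> ('b \<times> 'b) set \<Rightarrow> ('b \<Rightarrow> ('b \<Rightarrow> 'b) set) \<Rightarrow> ('a \<Rightarrow> 'b) \<Rightarrow> bool" where
  "lms_hom X R U Y S V \<phi> \<longleftrightarrow>
     \<phi> \<in> X \<rightarrow>\<^sub>E Y \<and>
     (\<forall>x\<in>X. \<forall>x'\<in>X. (x, x') \<in> R \<longleftrightarrow> (\<phi> x, \<phi> x') \<in> S) \<and>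
     (\<forall>x\<in>X. \<forall>u\<in>U x. \<exists>v\<in>V (\<phi> x). \<forall>y\<in>X. \<phi> (u y) = v (\<phi> y))"

definition directed_set :: "'i set \<Rightarrow> ('i \<Rightarrow> 'i \<Rightarrow> bool) \<Rightarrow> bool" where
  "directed_set I ge \<longleftrightarrow> I \<noteq> {} \<and>
     (\<forall>i\<in>I. ge i i) \<and>
     (\<forall>i\<in>I. \<forall>j\<in>I. ge i j \<and> ge j i \<longrightarrow> i = j) \<and>
     (\<forall>i\<in>I. \<forall>j\<in>I. \<forall>k\<in>I. ge i j \<and> ge j k \<longrightarrow> ge i k) \<and>
     (\<forall>i\<in>I. \<forall>j\<in>I. \<exists>k\<in>I. ge k i \<and> ge k j)"

definition inverse_system ::
  "'i set \<Rightarrow> ('i \<Rightarrow> 'i \<Rightarrow> bool) \<Rightarrow> ('i \<Rightarrow> 'a set) \<Rightarrow> ('i \<Rightarrow> ('a \<times> 'a) set) \<Rightarrow>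
   ('i \<Rightarrow> 'a \<Rightarrow> ('a \<Rightarrow> 'a) set) \<Rightarrow> ('i \<Rightarrow> 'i \<Rightarrow> 'a \<Rightarrow> 'a) \<Rightarrow> bool" where
  "inverse_system I ge X R U \<phi> \<longleftrightarrow>
     directed_set I ge \<and>
     (\<forall>i\<in>I. local_moufang_set (X i) (R i) (U i)) \<and>
     (\<forall>i\<in>I. \<forall>j\<in>I. ge i j \<longrightarrow> lms_hom (X i) (R i) (U i) (X j) (R j) (U j) (\<phi> i j)) \<and>
     (\<forall>i\<in>I. \<phi> i i = (\<lambda>x\<in>X i. x)) \<and>
     (\<forall>i\<in>I. \<forall>j\<in>I. \<forall>k\<in>I. ge i j \<and> ge j k \<longrightarrow> compose (X i) (\<phi> j k) (\<phi> i j) = \<phi> i k)"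

definition lim_set ::
  "'i set \<Rightarrow> ('i \<Rightarrow> 'i \<Rightarrow> bool) \<Rightarrow> ('i \<Rightarrow> 'a set) \<Rightarrow> ('i \<Rightarrow> 'i \<Rightarrow> 'a \<Rightarrow> 'a) \<Rightarrow> ('i \<Rightarrow> 'a) set" where
  "lim_set I ge X \<phi> = {x \<in> (\<Pi>\<^sub>E i\<in>I. X i). \<forall>i\<in>I. \<forall>j\<in>I. ge i j \<longrightarrow> \<phi> i j (x i) = x j}"

definition lim_rel ::
  "'i set \<Rightarrow> ('i \<Rightarrow> 'i \<Rightarrow> bool) \<Rightarrow> ('i \<Rightarrow> 'a set) \<Rightarrow> ('i \<Rightarrow> ('a \<times> 'a) set) \<Rightarrow>
   ('i \<Rightarrow> 'i \<Rightarrow> 'a \<Rightarrow> 'a) \<Rightarrow> (('i \<Rightarrow> 'a) \<times> ('i \<Rightarrow> 'a)) set" where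
  "lim_rel I ge X R \<phi> = {(x, y). x \<in> lim_set I ge X \<phi> \<and> y \<in> lim_set I ge X \<phi> \<and>
                                 (\<exists>i\<in>I. (x i, y i) \<in> R i)}"

definition lim_root_group ::
  "'i set \<Rightarrow> ('i \<Rightarrow> 'i \<Rightarrow> bool) \<Rightarrow> ('i \<Rightarrow> 'a set) \<Rightarrow> ('i \<Rightarrow> 'a \<Rightarrow> ('a \<Rightarrow> 'a) set) \<Rightarrow>
   ('i \<Rightarrow> 'i \<Rightarrow> 'a \<Rightarrow> 'a) \<Rightarrow> ('i \<Rightarrow> 'a) \<Rightarrow> (('i \<Rightarrow> 'a) \<Rightarrow> ('i \<Rightarrow> 'a)) set" where
  "lim_root_group I ge X U \<phi> x =
     {(\<lambda>y\<in>lim_set I ge X \<phi>. \<lambda>i\<in>I. u i (y i)) | u.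
        u \<in> (\<Pi>\<^sub>E i\<in>I. U i (x i)) \<and>
        (\<forall>i\<in>I. \<forall>j\<in>I. ge i j \<longrightarrow> (\<forall>z\<in>X i. \<phi> i j (u i z) = u j (\<phi> i j z)))}"

definition lim_proj :: "'i set \<Rightarrow> ('i \<Rightarrow> 'i \<Rightarrow> bool) \<Rightarrow> ('i \<Rightarrow> 'a set) \<Rightarrow>
   ('i \<Rightarrow> 'i \<Rightarrow> 'a \<Rightarrow> 'a) \<Rightarrow> 'i \<Rightarrow> ('i \<Rightarrow> 'a) \<Rightarrow> 'a" where
  "lim_proj I ge X \<phi> j = (\<lambda>x\<in>lim_set I ge X \<phi>. x j)"

end

theory Submission
  imports Defs
begin

lemma BijGroup_mult: "f \<in> Bij S \<Longrightarrow> g \<in> Bij S \<Longrightarrow> f \<otimes>\<^bsub>BijGroup S\<^esub> g = compose S f g"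
  by (simp add: BijGroup_def)
lemma BijGroup_one: "\<one>\<^bsub>BijGroup S\<^esub> = (\<lambda>x\<in>S. x)" by (simp add: BijGroup_def)
lemma BijGroup_carrier: "carrier (BijGroup S) = Bij S" by (simp add: BijGroup_def)

lemma Bij_app: "f \<in> Bij S \<Longrightarrow> x \<in> S \<Longrightarrow> f x \<in> S"
  using Bij_imp_funcset by blast
lemma Bij_ext: "f \<in> Bij S \<Longrightarrow> x \<notin> S \<Longrightarrow> f x = undefined"
  by (simp add: Bij_def extensional_def)
lemma Bij_inj: "f \<in> Bij S \<Longrightarrow> inj_on f S"
  by (simp add: Bij_def bij_betw_def)
lemma Bij_img: "f \<in> Bij S \<Longrightarrow> f ` S = S"
  by (simp add: Bij_def bij_betw_def)

lemma Bij_pair: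
  assumes "f \<in> extensional S" "g \<in> extensional S" "f \<in> S \<rightarrow> S" "g \<in> S \<rightarrow> S"
    "\<And>x. x\<in>S \<Longrightarrow> f (g x) = x" "\<And>x. x\<in>S \<Longrightarrow> g (f x) = x"
  shows "f \<in> Bij S" "g \<in> Bij S" "inv\<^bsub>BijGroup S\<^esub> f = g"
proof -
  have bf: "bij_betw f S S" by (rule bij_betwI[of f S S g]) (use assms in auto)
  have bg: "bij_betw g S S" by (rule bij_betwI[of g S S f]) (use assms in auto)
  show f: "f \<in> Bij S" using bf assms by (simp add: Bij_def)
  show "g \<in> Bij S" using bg assms by (simp add: Bij_def)
  have "inv\<^bsub>BijGroup S\<^esub> f = (\<lambda>x \<in> S. (inv_into S f) x)" by (rule inv_BijGroup[OF f])
  also have "\<dots> = g"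
  proof (rule ext)
    fix x show "(\<lambda>x \<in> S. (inv_into S f) x) x = g x"
    proof (cases "x \<in> S")
      case True
      then have "inv_into S f x = g x"
        using assms by (intro inv_into_f_eq) (auto simp: bij_betw_def bf[unfolded bij_betw_def])
      then show ?thesis using True by simp
    next
      case False then show ?thesis using assms(2) by (simp add: extensional_def)
    qed
  qed
  finally show "inv\<^bsub>BijGroup S\<^esub> f = g" .
qed

lemma BijGroup_inv_props:
  assumes f: "f \<in> Bij S" and x: "x \<in> S"
  shows "f ((inv\<^bsub>BijGroup S\<^esub> f) x) = x" "(inv\<^bsub>BijGroup S\<^esub> f) (f x) = x"
    "(inv\<^bsub>BijGroup S\<^esub> f) x \<in> S" "inv\<^bsub>BijGroup S\<^esub> f \<in> Bij S"
proof -
  have e: "inv\<^bsub>BijGroup S\<^esub> f = (\<lambda>x \<in> S. (inv_into S f) x)" by (rule inv_BijGroup[OF f])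
  have b: "bij_betw f S S" using f by (simp add: Bij_def)
  show "f ((inv\<^bsub>BijGroup S\<^esub> f) x) = x" using e b x by (simp add: bij_betw_def f_inv_into_f)
  show "(inv\<^bsub>BijGroup S\<^esub> f) (f x) = x" using e b x Bij_app[OF f x] by (simp add: bij_betw_def inv_into_f_f)
  show "(inv\<^bsub>BijGroup S\<^esub> f) x \<in> S" using e b x by (simp add: bij_betw_def inv_into_into)
  show "inv\<^bsub>BijGroup S\<^esub> f \<in> Bij S" using e f restrict_inv_into_Bij by metis
qed

lemma SymR_class:
  assumes eq: "equiv S R" and g: "g \<in> SymR S R" and c: "c \<in> S"
  shows "g ` (R``{c}) = R``{g c}"
proof -
  have gB: "g \<in> Bij S" and gr: "\<And>x y. x\<in>S \<Longrightarrow> y\<in>S \<Longrightarrow> (x, y) \<in> R \<longleftrightarrow> (g x, g y) \<in> R"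
    using g by (auto simp: SymR_def)
  have RS: "R \<subseteq> S \<times> S" using eq by (simp add: equiv_def refl_on_def)
  show ?thesis
  proof
    show "g ` (R``{c}) \<subseteq> R``{g c}" using RS gr c by auto
    show "R``{g c} \<subseteq> g ` (R``{c})"
    proof
      fix d assume "d \<in> R``{g c}"
      then have d: "d \<in> S" "(g c, d) \<in> R" using RS by auto
      then obtain b where b: "b \<in> S" "d = g b" using Bij_img[OF gB] by (metis imageE)
      then have "(c, b) \<in> R" using gr c d by auto
      then show "d \<in> g ` (R``{c})" using b by auto
    qed
  qed
qed

lemma induced_class:
  assumes "equiv S R" "g \<in> SymR S R" "c \<in> S"
  shows "induced S R g (R``{c}) = R``{g c}"
  using SymR_class[OF assms] assms(3) by (simp add: induced_def quotientI)

lemma SymR_Bij: "g \<in> SymR S R \<Longrightarrow> g \<in> Bij S" by (simp add: SymR_def)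

lemma induced_bij:
  assumes eq: "equiv S R" and g: "g \<in> SymR S R"
  shows "bij_betw (induced S R g) (S//R) (S//R)"
proof (rule bij_betw_imageI)
  have gB: "g \<in> Bij S" using g by (simp add: SymR_def)
  show "inj_on (induced S R g) (S // R)"
  proof (rule inj_onI)
    fix A B assume A: "A \<in> S//R" and B: "B \<in> S//R" and e: "induced S R g A = induced S R g B"
    then have "g ` A = g ` B" by (simp add: induced_def)
    moreover have "A \<subseteq> S" "B \<subseteq> S" using A B eq by (simp_all add: in_quotient_imp_subset)
    ultimately show "A = B" using Bij_inj[OF gB] by (simp add: inj_on_image_eq_iff)
  qed
  show "induced S R g ` (S // R) = S // R"
  proof
    show "induced S R g ` (S // R) \<subseteq> S // R"
      using induced_class[OF eq g] Bij_app[OF gB] by (auto simp: quotient_def) 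
    show "S // R \<subseteq> induced S R g ` (S // R)"
    proof
      fix C assume "C \<in> S//R"
      then obtain c where c: "c \<in> S" "C = R``{c}" by (auto simp: quotient_def)
      then obtain b where b: "b \<in> S" "c = g b" using Bij_img[OF gB] by (metis imageE)
      then show "C \<in> induced S R g ` (S // R)"
        using induced_class[OF eq g b(1)] c by (auto intro: quotientI)
    qed
  qed
qed

lemma bij_compl:
  assumes "bij_betw f S S" "A \<subseteq> S" "f ` A = A"
  shows "f ` (S - A) = S - A"
proof -
  have "inj_on f S" "f ` S = S" using assms(1) by (auto simp: bij_betw_def)
  then show ?thesis using assms(2,3) by (simp add: inj_on_image_set_diff)
qed

lemma ex1_same: "\<exists>!x. P x \<Longrightarrow> P a \<Longrightarrow> P b \<Longrightarrow> a = b" by blast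

context
  fixes X :: "'a set" and R and U
  assumes lms: "local_moufang_set X R U"
begin

lemma lms_equiv: "equiv X R"
  using lms unfolding local_moufang_set_def by (elim conjE) assumption
lemma lms_D2: "\<forall>x\<in>X. subgroup (U x) (BijGroup X) \<and> U x \<subseteq> SymR X R"
  using lms unfolding local_moufang_set_def by (elim conjE) assumption
lemma lms_D3: "\<forall>x\<in>X. \<forall>y\<in>X. (x, y) \<in> R \<longrightarrow> induced X R ` U x = induced X R ` U y"
  using lms unfolding local_moufang_set_def by (elim conjE) assumption
lemma lms_D4: "\<forall>x\<in>X. (\<forall>u\<in>U x. u x = x \<and> u ` (X - R `` {x}) = X - R `` {x}) \<and>
        (\<forall>y\<in>X - R `` {x}. \<forall>z\<in>X - R `` {x}. \<exists>!u. u \<in> U x \<and> u y = z)"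
  using lms unfolding local_moufang_set_def by (elim conjE) assumption
lemma lms_D5: "\<forall>x\<in>X. (\<forall>v\<in>induced X R ` U x. v (R `` {x}) = R `` {x} \<and>
                 v ` (X // R - {R `` {x}}) = X // R - {R `` {x}}) \<and>
        (\<forall>C\<in>X // R - {R `` {x}}. \<forall>D\<in>X // R - {R `` {x}}.
            \<exists>!v. v \<in> induced X R ` U x \<and> v C = D)"
  using lms unfolding local_moufang_set_def by (elim conjE) assumption
lemma lms_D6: "\<forall>x\<in>X. \<forall>g\<in>generate (BijGroup X) (\<Union>y\<in>X. U y).
        (\<lambda>u. g \<otimes>\<^bsub>BijGroup X\<^esub> u \<otimes>\<^bsub>BijGroup X\<^esub> inv\<^bsub>BijGroup X\<^esub> g) ` U x = U (g x)"
  using lms unfolding local_moufang_set_def by (elim conjE) assumption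

lemma lms_subgroup: "a \<in> X \<Longrightarrow> subgroup (U a) (BijGroup X)"
  using bspec[OF lms_D2] by (rule conjunct1)
lemma lms_SymR: "a \<in> X \<Longrightarrow> u \<in> U a \<Longrightarrow> u \<in> SymR X R"
  using conjunct2[OF bspec[OF lms_D2]] by (rule subsetD)
lemma lms_Bij: "a \<in> X \<Longrightarrow> u \<in> U a \<Longrightarrow> u \<in> Bij X"
  using lms_SymR SymR_Bij by blast
lemma lms_fix: "a \<in> X \<Longrightarrow> u \<in> U a \<Longrightarrow> u a = a"
  using bspec[OF conjunct1[OF bspec[OF lms_D4]]] by (rule conjunct1)
lemma lms_compl: "a \<in> X \<Longrightarrow> u \<in> U a \<Longrightarrow> c \<in> X \<Longrightarrow> (a, c) \<notin> R \<Longrightarrow> u c \<in> X \<and> (a, u c) \<notin> R"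
proof -
  assume a: "a \<in> X" "u \<in> U a" "c \<in> X" "(a, c) \<notin> R"
  have "u ` (X - R `` {a}) = X - R `` {a}" using conjunct2[OF bspec[OF conjunct1[OF bspec[OF lms_D4 a(1)]] a(2)]] .
  moreover have "c \<in> X - R `` {a}" using a by auto
  ultimately have "u c \<in> X - R `` {a}" by blast
  then show ?thesis by auto
qed
lemma lms_unique: "a \<in> X \<Longrightarrow> u \<in> U a \<Longrightarrow> u' \<in> U a \<Longrightarrow> c \<in> X \<Longrightarrow> (a, c) \<notin> R
   \<Longrightarrow> u c = u' c \<Longrightarrow> u = u'"
proof -
  assume a: "a \<in> X" "u \<in> U a" "u' \<in> U a" "c \<in> X" "(a, c) \<notin> R" "u c = u' c"
  have h: "\<forall>y\<in>X - R `` {a}. \<forall>z\<in>X - R `` {a}. \<exists>!u. u \<in> U a \<and> u y = z"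
    using conjunct2[OF bspec[OF lms_D4 a(1)]] .
  have c: "c \<in> X - R `` {a}" using a by auto
  have "u c \<in> X - R `` {a}" using lms_compl a by auto
  then have u1: "\<exists>!v. v \<in> U a \<and> v c = u c" by (rule bspec[OF bspec[OF h c]])
  show ?thesis using ex1_same[where P="\<lambda>v. v \<in> U a \<and> v c = u c", OF u1 conjI[OF a(2) refl] conjI[OF a(3) a(6)[symmetric]]] .
qed
lemma lms_ex: "a \<in> X \<Longrightarrow> c \<in> X \<Longrightarrow> d \<in> X \<Longrightarrow> (a, c) \<notin> R \<Longrightarrow> (a, d) \<notin> R \<Longrightarrow> \<exists>u\<in>U a. u c = d"
proof -
  assume a: "a \<in> X" "c \<in> X" "d \<in> X" "(a, c) \<notin> R" "(a, d) \<notin> R"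
  have h: "\<forall>y\<in>X - R `` {a}. \<forall>z\<in>X - R `` {a}. \<exists>!u. u \<in> U a \<and> u y = z"
    using conjunct2[OF bspec[OF lms_D4 a(1)]] .
  have cc: "c \<in> X - R `` {a}" and dd: "d \<in> X - R `` {a}" using a by auto
  have "\<exists>!u. u \<in> U a \<and> u c = d" by (rule bspec[OF bspec[OF h cc] dd])
  then show ?thesis using ex1_implies_ex by blast
qed

lemma lms_induced_eq:
  assumes a: "a \<in> X" "a2 \<in> X" "(a, a2) \<in> R" and u: "u \<in> U a" "u' \<in> U a2"
    and c: "c \<in> X" "(a, c) \<notin> R" "(u c, u' c) \<in> R"
  shows "induced X R u = induced X R u'"
proof -
  have eq: "equiv X R" by (rule lms_equiv)
  have uS: "u \<in> SymR X R" "u' \<in> SymR X R" using lms_SymR a u by auto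
  have ind0: "induced X R ` U a = induced X R ` U a2" by (rule lms_D3[rule_format, OF a(1) a(2) a(3)])
  have h: "\<forall>C\<in>X // R - {R `` {a}}. \<forall>D\<in>X // R - {R `` {a}}. \<exists>!v. v \<in> induced X R ` U a \<and> v C = D"
    using conjunct2[OF bspec[OF lms_D5 a(1)]] .
  have uc: "u c \<in> X" "(a, u c) \<notin> R" using lms_compl a u c by auto
  have nc: "(c, a) \<notin> R" "(u c, a) \<notin> R" using c(2) uc(2) eq by (meson equiv_def symD)+
  have C: "R``{c} \<in> X // R - {R `` {a}}"
    using c a eq nc by (auto simp: quotientI eq_equiv_class_iff)
  have D: "R``{u c} \<in> X // R - {R `` {a}}"
    using uc a eq nc by (auto simp: quotientI eq_equiv_class_iff)
  have e1: "induced X R u (R``{c}) = R``{u c}" by (rule induced_class[OF eq uS(1) c(1)])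
  have "induced X R u' (R``{c}) = R``{u' c}" by (rule induced_class[OF eq uS(2) c(1)])
  also have "\<dots> = R``{u c}" using c(3) eq by (metis equiv_class_eq)
  finally have e2: "induced X R u' (R``{c}) = R``{u c}" .
  have m1: "induced X R u \<in> induced X R ` U a" using u by blast
  have m2: "induced X R u' \<in> induced X R ` U a" using u ind0 by blast
  have u1: "\<exists>!v. v \<in> induced X R ` U a \<and> v (R``{c}) = R``{u c}" by (rule bspec[OF bspec[OF h C] D])
  show ?thesis using ex1_same[where P="\<lambda>v. v \<in> induced X R ` U a \<and> v (R``{c}) = R``{u c}", OF u1 conjI[OF m1 e1] conjI[OF m2 e2]] .
qed

lemma lms_agree:
  assumes a: "a \<in> X" "a2 \<in> X" "(a, a2) \<in> R" and u: "u \<in> U a" "u' \<in> U a2"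
    and c: "c \<in> X" "(a, c) \<notin> R" "(u c, u' c) \<in> R" and b: "b \<in> X"
  shows "(u b, u' b) \<in> R"
proof -
  have eq: "equiv X R" by (rule lms_equiv)
  have uS: "u \<in> SymR X R" "u' \<in> SymR X R" using lms_SymR a u by auto
  have "R``{u b} = induced X R u (R``{b})" by (rule induced_class[OF eq uS(1) b, symmetric])
  also have "\<dots> = induced X R u' (R``{b})" by (simp only: lms_induced_eq[OF a u c])
  also have "\<dots> = R``{u' b}" by (rule induced_class[OF eq uS(2) b])
  finally have e: "R``{u b} = R``{u' b}" .
  have "u b \<in> X" "u' b \<in> X" using Bij_app[OF SymR_Bij[OF uS(1)] b] Bij_app[OF SymR_Bij[OF uS(2)] b] by auto
  then show ?thesis using eq e by (simp add: eq_equiv_class_iff)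
qed

lemma lms_conj:
  assumes "a \<in> X" "g \<in> generate (BijGroup X) (\<Union>y\<in>X. U y)" "u \<in> U a"
  shows "g \<otimes>\<^bsub>BijGroup X\<^esub> u \<otimes>\<^bsub>BijGroup X\<^esub> inv\<^bsub>BijGroup X\<^esub> g \<in> U (g a)"
proof -
  have "(\<lambda>u. g \<otimes>\<^bsub>BijGroup X\<^esub> u \<otimes>\<^bsub>BijGroup X\<^esub> inv\<^bsub>BijGroup X\<^esub> g) ` U a = U (g a)"
    by (rule bspec[OF bspec[OF lms_D6 assms(1)] assms(2)])
  then show ?thesis using assms(3) by blast
qed

end

lemma BijGroup_inv_Bij: "f \<in> Bij S \<Longrightarrow> inv\<^bsub>BijGroup S\<^esub> f \<in> Bij S"
  using inv_BijGroup restrict_inv_into_Bij by metis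

locale lim =
  fixes I :: "'i set" and ge :: "'i \<Rightarrow> 'i \<Rightarrow> bool" and X :: "'i \<Rightarrow> 'a set"
    and R :: "'i \<Rightarrow> ('a \<times> 'a) set" and U :: "'i \<Rightarrow> 'a \<Rightarrow> ('a \<Rightarrow> 'a) set"
    and \<phi> :: "'i \<Rightarrow> 'i \<Rightarrow> 'a \<Rightarrow> 'a"
  assumes sys: "inverse_system I ge X R U \<phi>"
begin

lemma dir: "directed_set I ge" using sys by (simp add: inverse_system_def)
lemma I_ne: "I \<noteq> {}" using dir by (simp add: directed_set_def)
lemma ge_up: "i \<in> I \<Longrightarrow> j \<in> I \<Longrightarrow> \<exists>k\<in>I. ge k i \<and> ge k j"
  using dir unfolding directed_set_def by blast
lemma lmsI: "i \<in> I \<Longrightarrow> local_moufang_set (X i) (R i) (U i)"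
  using sys by (simp add: inverse_system_def)
lemma homI: "i \<in> I \<Longrightarrow> j \<in> I \<Longrightarrow> ge i j \<Longrightarrow> lms_hom (X i) (R i) (U i) (X j) (R j) (U j) (\<phi> i j)"
  using sys by (simp add: inverse_system_def)
lemma phi_mem: "i \<in> I \<Longrightarrow> j \<in> I \<Longrightarrow> ge i j \<Longrightarrow> z \<in> X i \<Longrightarrow> \<phi> i j z \<in> X j"
proof -
  assume a: "i \<in> I" "j \<in> I" "ge i j" "z \<in> X i"
  then have "\<phi> i j \<in> X i \<rightarrow>\<^sub>E X j" using homI[OF a(1-3)] by (simp add: lms_hom_def)
  then show ?thesis using a(4) by blast
qed
lemma phi_R: "i \<in> I \<Longrightarrow> j \<in> I \<Longrightarrow> ge i j \<Longrightarrow> a \<in> X i \<Longrightarrow> b \<in> X i \<Longrightarrow>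
   (a, b) \<in> R i \<longleftrightarrow> (\<phi> i j a, \<phi> i j b) \<in> R j"
  using homI unfolding lms_hom_def by blast
lemma phi_U: "i \<in> I \<Longrightarrow> j \<in> I \<Longrightarrow> ge i j \<Longrightarrow> a \<in> X i \<Longrightarrow> u \<in> U i a \<Longrightarrow>
   \<exists>v\<in>U j (\<phi> i j a). \<forall>y\<in>X i. \<phi> i j (u y) = v (\<phi> i j y)"
  using homI unfolding lms_hom_def by blast

abbreviation "L \<equiv> lim_set I ge X \<phi>"
abbreviation "RL \<equiv> lim_rel I ge X R \<phi>"

lemma L_D: "x \<in> L \<Longrightarrow> i \<in> I \<Longrightarrow> x i \<in> X i"
  by (auto simp: lim_set_def)
lemma L_D2: "x \<in> L \<Longrightarrow> i \<in> I \<Longrightarrow> j \<in> I \<Longrightarrow> ge i j \<Longrightarrow> \<phi> i j (x i) = x j"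
  by (auto simp: lim_set_def)
lemma L_D3: "x \<in> L \<Longrightarrow> i \<notin> I \<Longrightarrow> x i = undefined"
  by (auto simp: lim_set_def PiE_def extensional_def)
lemma L_I: "(\<And>i. i \<in> I \<Longrightarrow> x i \<in> X i) \<Longrightarrow> (\<And>i. i \<notin> I \<Longrightarrow> x i = undefined) \<Longrightarrow>
   (\<And>i j. i \<in> I \<Longrightarrow> j \<in> I \<Longrightarrow> ge i j \<Longrightarrow> \<phi> i j (x i) = x j) \<Longrightarrow> x \<in> L"
  by (auto simp: lim_set_def PiE_def extensional_def)
lemma L_eqI: "x \<in> L \<Longrightarrow> y \<in> L \<Longrightarrow> (\<And>i. i \<in> I \<Longrightarrow> x i = y i) \<Longrightarrow> x = y"
  using L_D3 by (metis ext)

lemma part1: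
  assumes x: "x \<in> L" and y: "y \<in> L" and i: "i \<in> I" "(x i, y i) \<in> R i" and j: "j \<in> I"
  shows "(x j, y j) \<in> R j"
proof -
  obtain k where k: "k \<in> I" "ge k i" "ge k j" using ge_up[OF i(1) j] by blast
  have "(x k, y k) \<in> R k"
    using phi_R[OF k(1) i(1) k(2) L_D[OF x k(1)] L_D[OF y k(1)]] L_D2[OF x k(1) i(1) k(2)]
      L_D2[OF y k(1) i(1) k(2)] i(2) by simp
  then show ?thesis
    using phi_R[OF k(1) j k(3) L_D[OF x k(1)] L_D[OF y k(1)]] L_D2[OF x k(1) j k(3)]
      L_D2[OF y k(1) j k(3)] by simp
qed

lemma RL_iff: "(x, y) \<in> RL \<longleftrightarrow> x \<in> L \<and> y \<in> L \<and> (\<forall>i\<in>I. (x i, y i) \<in> R i)"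
proof
  assume "(x, y) \<in> RL"
  then show "x \<in> L \<and> y \<in> L \<and> (\<forall>i\<in>I. (x i, y i) \<in> R i)"
    unfolding lim_rel_def using part1 by blast
next
  assume "x \<in> L \<and> y \<in> L \<and> (\<forall>i\<in>I. (x i, y i) \<in> R i)"
  then show "(x, y) \<in> RL" unfolding lim_rel_def using I_ne by blast
qed

lemma equiv_RL: "equiv L RL"
proof (rule equivI)
  show "RL \<subseteq> L \<times> L" using RL_iff by auto
  show "refl_on L RL"
  proof (rule refl_onI)
    fix x assume x: "x \<in> L"
    have "\<forall>i\<in>I. (x i, x i) \<in> R i"
      using lms_equiv[OF lmsI] L_D[OF x] by (meson equiv_def refl_onD)
    then show "(x, x) \<in> RL" using RL_iff x by blast
  qed
  show "sym RL"
  proof (rule symI)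
    fix x y assume "(x, y) \<in> RL"
    then show "(y, x) \<in> RL" using RL_iff lms_equiv[OF lmsI] by (meson equiv_def symD)
  qed
  show "trans RL"
  proof (rule transI)
    fix x y z assume "(x, y) \<in> RL" "(y, z) \<in> RL"
    then show "(x, z) \<in> RL" using RL_iff lms_equiv[OF lmsI] by (meson equiv_def transD)
  qed
qed

definition compat :: "('i \<Rightarrow> 'a \<Rightarrow> 'a) \<Rightarrow> bool" where
  "compat u \<longleftrightarrow> (\<forall>i\<in>I. \<forall>j\<in>I. ge i j \<longrightarrow> (\<forall>z\<in>X i. \<phi> i j (u i z) = u j (\<phi> i j z)))"
definition Ft :: "('i \<Rightarrow> 'a \<Rightarrow> 'a) \<Rightarrow> ('i \<Rightarrow> 'a) \<Rightarrow> ('i \<Rightarrow> 'a)" where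
  "Ft u = (\<lambda>y\<in>L. \<lambda>i\<in>I. u i (y i))"
definition Cp where "Cp = {u. u \<in> (\<Pi>\<^sub>E i\<in>I. Bij (X i)) \<and> compat u}"
definition T where "T x = {u. u \<in> (\<Pi>\<^sub>E i\<in>I. U i (x i)) \<and> compat u}"
definition tinv where "tinv u = (\<lambda>i\<in>I. inv\<^bsub>BijGroup (X i)\<^esub> (u i))"
definition tmul where "tmul u w = (\<lambda>i\<in>I. compose (X i) (u i) (w i))"
definition tone where "tone = (\<lambda>i\<in>I. \<lambda>z\<in>X i. z)"

lemma UL_eq: "lim_root_group I ge X U \<phi> x = Ft ` T x"
  unfolding lim_root_group_def Ft_def T_def compat_def by blast

lemma compatD: "compat u \<Longrightarrow> i \<in> I \<Longrightarrow> j \<in> I \<Longrightarrow> ge i j \<Longrightarrow> z \<in> X i \<Longrightarrow> \<phi> i j (u i z) = u j (\<phi> i j z)"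
  by (simp add: compat_def)

lemma Cp_D: "u \<in> Cp \<Longrightarrow> i \<in> I \<Longrightarrow> u i \<in> Bij (X i)"
  by (auto simp: Cp_def)
lemma Cp_D2: "u \<in> Cp \<Longrightarrow> compat u"
  by (auto simp: Cp_def)
lemma T_D: "u \<in> T x \<Longrightarrow> i \<in> I \<Longrightarrow> u i \<in> U i (x i)"
  by (auto simp: T_def)
lemma T_Cp: assumes x: "x \<in> L" and u: "u \<in> T x" shows "u \<in> Cp"
proof -
  have "\<And>i. i \<in> I \<Longrightarrow> u i \<in> Bij (X i)" using lms_Bij[OF lmsI L_D[OF x] T_D[OF u]] by blast
  then show ?thesis using u by (auto simp: T_def Cp_def)
qed

lemma Ft_app: "y \<in> L \<Longrightarrow> Ft u y = (\<lambda>i\<in>I. u i (y i))"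
  by (simp add: Ft_def)
lemma Ft_app_i: "y \<in> L \<Longrightarrow> i \<in> I \<Longrightarrow> Ft u y i = u i (y i)"
  by (simp add: Ft_def)
lemma Ft_L: "u \<in> Cp \<Longrightarrow> y \<in> L \<Longrightarrow> Ft u y \<in> L"
proof (rule L_I)
  assume u: "u \<in> Cp" and y: "y \<in> L"
  show "\<And>i. i \<in> I \<Longrightarrow> Ft u y i \<in> X i" using Bij_app[OF Cp_D[OF u] L_D[OF y]] y by (simp add: Ft_app_i)
  show "\<And>i. i \<notin> I \<Longrightarrow> Ft u y i = undefined" using y by (simp add: Ft_def)
  fix i j assume ij: "i \<in> I" "j \<in> I" "ge i j"
  show "\<phi> i j (Ft u y i) = Ft u y j"
    using compatD[OF Cp_D2[OF u] ij L_D[OF y ij(1)]] L_D2[OF y ij] y ij by (simp add: Ft_app_i)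
qed

lemma compose_app: "z \<in> S \<Longrightarrow> compose S f g z = f (g z)"
  by (simp add: compose_def)

lemma tinv_Cp: assumes u: "u \<in> Cp" shows "tinv u \<in> Cp"
proof -
  have "tinv u \<in> (\<Pi>\<^sub>E i\<in>I. Bij (X i))"
    using BijGroup_inv_Bij[OF Cp_D[OF u]] by (auto simp: tinv_def)
  moreover have "compat (tinv u)" unfolding compat_def
  proof (intro ballI impI)
    fix i j z assume ij: "i \<in> I" "j \<in> I" "ge i j" and z: "z \<in> X i"
    let ?a = "(inv\<^bsub>BijGroup (X i)\<^esub> (u i)) z"
    have a: "?a \<in> X i" "u i ?a = z" using BijGroup_inv_props[OF Cp_D[OF u ij(1)] z] by auto
    have "\<phi> i j z = u j (\<phi> i j ?a)" using compatD[OF Cp_D2[OF u] ij a(1)] a(2) by simp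
    then have "(inv\<^bsub>BijGroup (X j)\<^esub> (u j)) (\<phi> i j z) = \<phi> i j ?a"
      using BijGroup_inv_props(2)[OF Cp_D[OF u ij(2)] phi_mem[OF ij a(1)]] by simp
    then show "\<phi> i j (tinv u i z) = tinv u j (\<phi> i j z)" using ij by (simp add: tinv_def)
  qed
  ultimately show ?thesis by (simp add: Cp_def)
qed

lemma tmul_Cp: assumes u: "u \<in> Cp" and w: "w \<in> Cp" shows "tmul u w \<in> Cp"
proof -
  have "tmul u w \<in> (\<Pi>\<^sub>E i\<in>I. Bij (X i))"
    using compose_Bij[OF Cp_D[OF u] Cp_D[OF w]] by (auto simp: tmul_def)
  moreover have "compat (tmul u w)" unfolding compat_def
  proof (intro ballI impI)
    fix i j z assume ij: "i \<in> I" "j \<in> I" "ge i j" and z: "z \<in> X i"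
    have wz: "w i z \<in> X i" using Bij_app[OF Cp_D[OF w ij(1)] z] .
    show "\<phi> i j (tmul u w i z) = tmul u w j (\<phi> i j z)"
      using ij z wz phi_mem[OF ij z] compatD[OF Cp_D2[OF u] ij wz] compatD[OF Cp_D2[OF w] ij z]
      by (simp add: tmul_def compose_app)
  qed
  ultimately show ?thesis by (simp add: Cp_def)
qed

lemma tone_Cp: "tone \<in> Cp"
proof -
  have "tone \<in> (\<Pi>\<^sub>E i\<in>I. Bij (X i))" using id_Bij by (auto simp: tone_def)
  moreover have "compat tone" unfolding compat_def
    using phi_mem by (simp add: tone_def)
  ultimately show ?thesis by (simp add: Cp_def)
qed

lemma Ft_tmul: assumes "u \<in> Cp" "w \<in> Cp" "y \<in> L" shows "Ft (tmul u w) y = Ft u (Ft w y)"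
proof -
  have a: "Ft w y \<in> L" using Ft_L assms by blast
  have "Ft u (Ft w y) = (\<lambda>i\<in>I. u i (Ft w y i))" by (rule Ft_app[OF a])
  moreover have "Ft (tmul u w) y = (\<lambda>i\<in>I. tmul u w i (y i))" by (rule Ft_app[OF assms(3)])
  moreover have "(\<lambda>i\<in>I. tmul u w i (y i)) = (\<lambda>i\<in>I. u i (Ft w y i))"
    by (rule restrict_ext) (simp add: tmul_def compose_app L_D assms(3) Ft_app_i)
  ultimately show ?thesis by simp
qed

lemma Ft_tinv:
  assumes u: "u \<in> Cp" and y: "y \<in> L"
  shows "Ft u (Ft (tinv u) y) = y" "Ft (tinv u) (Ft u y) = y"
proof -
  have a: "Ft (tinv u) y \<in> L" "Ft u y \<in> L" using Ft_L tinv_Cp u y by auto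
  show "Ft u (Ft (tinv u) y) = y"
  proof (rule L_eqI[OF Ft_L[OF u a(1)] y])
    fix i assume i: "i \<in> I"
    have "Ft u (Ft (tinv u) y) i = u i (tinv u i (y i))" using Ft_app_i[OF a(1) i] Ft_app_i[OF y i] by simp
    also have "\<dots> = y i" using i BijGroup_inv_props(1)[OF Cp_D[OF u i] L_D[OF y i]] by (simp add: tinv_def)
    finally show "Ft u (Ft (tinv u) y) i = y i" .
  qed
  show "Ft (tinv u) (Ft u y) = y"
  proof (rule L_eqI[OF Ft_L[OF tinv_Cp[OF u] a(2)] y])
    fix i assume i: "i \<in> I"
    have "Ft (tinv u) (Ft u y) i = tinv u i (u i (y i))" using Ft_app_i[OF a(2) i] Ft_app_i[OF y i] by simp
    also have "\<dots> = y i" using i BijGroup_inv_props(2)[OF Cp_D[OF u i] L_D[OF y i]] by (simp add: tinv_def)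
    finally show "Ft (tinv u) (Ft u y) i = y i" .
  qed
qed

lemma Ft_ext: "Ft u \<in> extensional L" by (simp add: Ft_def)

lemma Ft_Bij:
  assumes u: "u \<in> Cp"
  shows "Ft u \<in> Bij L" "inv\<^bsub>BijGroup L\<^esub> (Ft u) = Ft (tinv u)"
proof -
  have f: "Ft u \<in> L \<rightarrow> L" "Ft (tinv u) \<in> L \<rightarrow> L" using Ft_L[OF u] Ft_L[OF tinv_Cp[OF u]] by auto
  note b = Bij_pair[OF Ft_ext Ft_ext f Ft_tinv(1)[OF u] Ft_tinv(2)[OF u]]
  show "Ft u \<in> Bij L" by (rule b(1))
  show "inv\<^bsub>BijGroup L\<^esub> (Ft u) = Ft (tinv u)" by (rule b(3))
qed

lemma Ft_mult: assumes u: "u \<in> Cp" and w: "w \<in> Cp" shows "Ft u \<otimes>\<^bsub>BijGroup L\<^esub> Ft w = Ft (tmul u w)"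
proof -
  have "Ft u \<otimes>\<^bsub>BijGroup L\<^esub> Ft w = compose L (Ft u) (Ft w)"
    by (rule BijGroup_mult[OF Ft_Bij(1)[OF u] Ft_Bij(1)[OF w]])
  also have "\<dots> = Ft (tmul u w)"
  proof (rule ext)
    fix y show "compose L (Ft u) (Ft w) y = Ft (tmul u w) y"
    proof (cases "y \<in> L")
      case True then show ?thesis by (simp add: compose_def Ft_tmul[OF u w True])
    next
      case False then show ?thesis by (simp add: compose_def Ft_def)
    qed
  qed
  finally show ?thesis .
qed

lemma Ft_one: "Ft tone = \<one>\<^bsub>BijGroup L\<^esub>"
proof (rule ext)
  fix y show "Ft tone y = \<one>\<^bsub>BijGroup L\<^esub> y"
  proof (cases "y \<in> L")
    case True
    have "Ft tone y = y" by (rule L_eqI[OF Ft_L[OF tone_Cp True] True]) (simp add: Ft_app_i True tone_def L_D)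
    then show ?thesis using True by (simp add: BijGroup_one)
  qed (simp add: Ft_def BijGroup_one)
qed

end

lemma (in group) conj_cancel: "a \<in> carrier G \<Longrightarrow> v \<in> carrier G \<Longrightarrow> a \<otimes> (inv a \<otimes> v \<otimes> a) \<otimes> inv a = v"
  by (simp add: m_assoc flip: m_assoc[of a "inv a"])

context lim begin

lemma T_I: "(\<And>i. i \<in> I \<Longrightarrow> u i \<in> U i (x i)) \<Longrightarrow> u \<in> extensional I \<Longrightarrow> compat u \<Longrightarrow> u \<in> T x"
  by (auto simp: T_def PiE_def)

lemma tmul_T: assumes x: "x \<in> L" and u: "u \<in> T x" and w: "w \<in> T x" shows "tmul u w \<in> T x"
proof (rule T_I)
  show "compat (tmul u w)" using Cp_D2[OF tmul_Cp[OF T_Cp[OF x u] T_Cp[OF x w]]] .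
  show "tmul u w \<in> extensional I" by (simp add: tmul_def)
  fix i assume i: "i \<in> I"
  interpret sg: subgroup "U i (x i)" "BijGroup (X i)" by (rule lms_subgroup[OF lmsI[OF i] L_D[OF x i]])
  have "tmul u w i = u i \<otimes>\<^bsub>BijGroup (X i)\<^esub> w i"
    using i BijGroup_mult[OF Cp_D[OF T_Cp[OF x u] i] Cp_D[OF T_Cp[OF x w] i]] by (simp add: tmul_def)
  then show "tmul u w i \<in> U i (x i)" using T_D[OF u i] T_D[OF w i] by simp
qed

lemma tinv_T: assumes x: "x \<in> L" and u: "u \<in> T x" shows "tinv u \<in> T x"
proof (rule T_I)
  show "compat (tinv u)" using Cp_D2[OF tinv_Cp[OF T_Cp[OF x u]]] .
  show "tinv u \<in> extensional I" by (simp add: tinv_def)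
  fix i assume i: "i \<in> I"
  interpret sg: subgroup "U i (x i)" "BijGroup (X i)" by (rule lms_subgroup[OF lmsI[OF i] L_D[OF x i]])
  show "tinv u i \<in> U i (x i)" using T_D[OF u i] i by (simp add: tinv_def)
qed

lemma tone_T: assumes x: "x \<in> L" shows "tone \<in> T x"
proof (rule T_I)
  show "compat tone" using Cp_D2[OF tone_Cp] .
  show "tone \<in> extensional I" by (simp add: tone_def)
  fix i assume i: "i \<in> I"
  interpret sg: subgroup "U i (x i)" "BijGroup (X i)" by (rule lms_subgroup[OF lmsI[OF i] L_D[OF x i]])
  show "tone i \<in> U i (x i)" using sg.one_closed i by (simp add: tone_def BijGroup_one)
qed

lemma UL_subgroup: assumes x: "x \<in> L" shows "subgroup (Ft ` T x) (BijGroup L)"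
proof (rule subgroup.intro)
  show "Ft ` T x \<subseteq> carrier (BijGroup L)" using Ft_Bij(1)[OF T_Cp[OF x]] by (auto simp: BijGroup_carrier)
  show "\<And>a b. a \<in> Ft ` T x \<Longrightarrow> b \<in> Ft ` T x \<Longrightarrow> a \<otimes>\<^bsub>BijGroup L\<^esub> b \<in> Ft ` T x"
    using Ft_mult[OF T_Cp[OF x] T_Cp[OF x]] tmul_T[OF x] by auto
  show "\<one>\<^bsub>BijGroup L\<^esub> \<in> Ft ` T x" using Ft_one tone_T[OF x] by force
  show "\<And>a. a \<in> Ft ` T x \<Longrightarrow> inv\<^bsub>BijGroup L\<^esub> a \<in> Ft ` T x"
    using Ft_Bij(2)[OF T_Cp[OF x]] tinv_T[OF x] by auto
qed

lemma UL_SymR: assumes x: "x \<in> L" and u: "u \<in> T x" shows "Ft u \<in> SymR L RL"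
  unfolding SymR_def
proof (intro CollectI conjI ballI)
  show "Ft u \<in> Bij L" by (rule Ft_Bij(1)[OF T_Cp[OF x u]])
  fix y z assume y: "y \<in> L" and z: "z \<in> L"
  have yz: "Ft u y \<in> L" "Ft u z \<in> L" using Ft_L[OF T_Cp[OF x u]] y z by auto
  have "\<forall>i\<in>I. (y i, z i) \<in> R i \<longleftrightarrow> (u i (y i), u i (z i)) \<in> R i"
    using lms_SymR[OF lmsI L_D[OF x] T_D[OF u]] L_D[OF y] L_D[OF z] by (simp add: SymR_def)
  then show "(y, z) \<in> RL \<longleftrightarrow> (Ft u y, Ft u z) \<in> RL"
    using RL_iff y z yz Ft_app_i[OF y] Ft_app_i[OF z] by auto
qed

lemma out_comp: "x \<in> L \<Longrightarrow> z \<in> L \<Longrightarrow> (x, z) \<notin> RL \<Longrightarrow> i \<in> I \<Longrightarrow> (x i, z i) \<notin> R i"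
  using RL_iff part1 by blast

lemma T_ext: "u \<in> T x \<Longrightarrow> i \<notin> I \<Longrightarrow> u i = undefined"
  by (auto simp: T_def PiE_def extensional_def)

lemma Ft_inj:
  assumes x: "x \<in> L" and z: "z \<in> L" "(x, z) \<notin> RL" and u: "u \<in> T x" and w: "w \<in> T x"
    and e: "Ft u z = Ft w z"
  shows "u = w"
proof (rule ext)
  fix i show "u i = w i"
  proof (cases "i \<in> I")
    case True
    have "u i (z i) = w i (z i)" using e Ft_app_i[OF z(1) True] by metis
    then show ?thesis
      using lms_unique[OF lmsI[OF True] L_D[OF x True] T_D[OF u True] T_D[OF w True] L_D[OF z(1) True]
          out_comp[OF x z True]] by simp
  next
    case False then show ?thesis using T_ext u w by simp
  qed
qed

lemma LM1a: assumes x: "x \<in> L" and u: "u \<in> T x" shows "Ft u x = x"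
  by (rule L_eqI[OF Ft_L[OF T_Cp[OF x u] x] x])
     (simp add: Ft_app_i[OF x] lms_fix[OF lmsI L_D[OF x] T_D[OF u]])

lemma LM1b: assumes x: "x \<in> L" and u: "u \<in> T x" shows "Ft u ` (L - RL``{x}) = L - RL``{x}"
proof (rule bij_compl)
  show "bij_betw (Ft u) L L" using Ft_Bij(1)[OF T_Cp[OF x u]] by (simp add: Bij_def)
  show "RL `` {x} \<subseteq> L" using RL_iff by auto
  show "Ft u ` RL `` {x} = RL `` {x}"
    using SymR_class[OF equiv_RL UL_SymR[OF x u] x] LM1a[OF x u] by simp
qed

lemma LM1ex:
  assumes x: "x \<in> L" and y: "y \<in> L" "(x, y) \<notin> RL" and z: "z \<in> L" "(x, z) \<notin> RL"
  shows "\<exists>u\<in>T x. Ft u y = z"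
proof -
  define w where "w = (\<lambda>i\<in>I. SOME v. v \<in> U i (x i) \<and> v (y i) = z i)"
  have w: "\<And>i. i \<in> I \<Longrightarrow> w i \<in> U i (x i) \<and> w i (y i) = z i"
  proof -
    fix i assume i: "i \<in> I"
    have "\<exists>v\<in>U i (x i). v (y i) = z i"
      by (rule lms_ex[OF lmsI[OF i] L_D[OF x i] L_D[OF y(1) i] L_D[OF z(1) i] out_comp[OF x y i] out_comp[OF x z i]])
    then have ex: "\<exists>v. v \<in> U i (x i) \<and> v (y i) = z i" by blast
    have "w i = (SOME v. v \<in> U i (x i) \<and> v (y i) = z i)" using i by (simp add: w_def)
    then show "w i \<in> U i (x i) \<and> w i (y i) = z i" using someI_ex[OF ex] by simp
  qed
  have c: "compat w" unfolding compat_def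
  proof (intro ballI impI)
    fix i j a assume ij: "i \<in> I" "j \<in> I" "ge i j" and a: "a \<in> X i"
    obtain v where v: "v \<in> U j (\<phi> i j (x i))" "\<forall>b\<in>X i. \<phi> i j (w i b) = v (\<phi> i j b)"
      using phi_U[OF ij L_D[OF x ij(1)] conjunct1[OF w[OF ij(1)]]] by blast
    have v2: "v \<in> U j (x j)" using v(1) L_D2[OF x ij] by simp
    have "v (y j) = z j"
      using v(2) L_D[OF y(1) ij(1)] w[OF ij(1)] L_D2[OF y(1) ij] L_D2[OF z(1) ij] by metis
    then have "v = w j"
      using lms_unique[OF lmsI[OF ij(2)] L_D[OF x ij(2)] v2 conjunct1[OF w[OF ij(2)]] L_D[OF y(1) ij(2)]
          out_comp[OF x y ij(2)]] w[OF ij(2)] by simp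
    then show "\<phi> i j (w i a) = w j (\<phi> i j a)" using v(2) a by simp
  qed
  have wT: "w \<in> T x" by (rule T_I) (use w c in \<open>auto simp: w_def\<close>)
  have "Ft w y = z"
    by (rule L_eqI[OF Ft_L[OF T_Cp[OF x wT] y(1)] z(1)]) (simp add: Ft_app_i[OF y(1)] w)
  then show ?thesis using wT by blast
qed

lemma ind_eq:
  assumes x1: "x1 \<in> L" and x2: "x2 \<in> L" and x12: "(x1, x2) \<in> RL"
    and u1: "u1 \<in> T x1" and u2: "u2 \<in> T x2"
    and c: "c \<in> L" "(x1, c) \<notin> RL" "(Ft u1 c, Ft u2 c) \<in> RL"
  shows "induced L RL (Ft u1) = induced L RL (Ft u2)"
proof -
  have rel: "\<And>b. b \<in> L \<Longrightarrow> (Ft u1 b, Ft u2 b) \<in> RL"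
  proof -
    fix b assume b: "b \<in> L"
    have ub: "Ft u1 b \<in> L" "Ft u2 b \<in> L" using Ft_L[OF T_Cp[OF x1 u1] b] Ft_L[OF T_Cp[OF x2 u2] b] .
    have uc: "Ft u1 c \<in> L" "Ft u2 c \<in> L" using Ft_L[OF T_Cp[OF x1 u1] c(1)] Ft_L[OF T_Cp[OF x2 u2] c(1)] .
    have "\<forall>i\<in>I. (u1 i (b i), u2 i (b i)) \<in> R i"
    proof
      fix i assume i: "i \<in> I"
      have "(u1 i (c i), u2 i (c i)) \<in> R i"
        using c(3) RL_iff Ft_app_i[OF c(1) i] i by metis
      then show "(u1 i (b i), u2 i (b i)) \<in> R i"
        using lms_agree[OF lmsI[OF i] L_D[OF x1 i] L_D[OF x2 i] _ T_D[OF u1 i] T_D[OF u2 i] L_D[OF c(1) i]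
          out_comp[OF x1 c(1,2) i] _ L_D[OF b i]] x12 RL_iff i by blast
    qed
    then show "(Ft u1 b, Ft u2 b) \<in> RL" using RL_iff ub Ft_app_i[OF b] by simp
  qed
  show ?thesis
  proof (rule ext)
    fix C show "induced L RL (Ft u1) C = induced L RL (Ft u2) C"
    proof (cases "C \<in> L // RL")
      case True
      then obtain b where b: "b \<in> L" "C = RL``{b}" by (auto simp: quotient_def)
      have "induced L RL (Ft u1) C = RL``{Ft u1 b}"
        using induced_class[OF equiv_RL UL_SymR[OF x1 u1] b(1)] b(2) by simp
      also have "\<dots> = RL``{Ft u2 b}" using equiv_class_eq[OF equiv_RL rel[OF b(1)]] .
      also have "\<dots> = induced L RL (Ft u2) C"
        using induced_class[OF equiv_RL UL_SymR[OF x2 u2] b(1)] b(2) by simp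
      finally show ?thesis .
    next
      case False then show ?thesis by (simp add: induced_def)
    qed
  qed
qed

end

lemma exists_out_gen:
  assumes eq: "equiv Y S" and mt: "more_than_two (Y // S)" and y: "y \<in> Y"
  shows "\<exists>z\<in>Y. (y, z) \<notin> S"
proof -
  obtain A B C where ABC: "A \<in> Y//S" "B \<in> Y//S" "C \<in> Y//S" "A \<noteq> B" "A \<noteq> C" "B \<noteq> C"
    using mt unfolding more_than_two_def by blast
  then obtain D where D: "D \<in> Y//S" "D \<noteq> S``{y}" by metis
  then obtain z where z: "z \<in> Y" "D = S``{z}" by (auto simp: quotient_def)
  have "(y, z) \<notin> S" using D z equiv_class_eq[OF eq] by metis
  then show ?thesis using z by blast
qed

context lim begin

lemma RL_refl: "x \<in> L \<Longrightarrow> (x, x) \<in> RL" using equiv_RL by (meson equiv_def refl_onD)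
lemma RL_sym: "(x, y) \<in> RL \<Longrightarrow> (y, x) \<in> RL" using equiv_RL by (meson equiv_def symD)
lemma RL_trans: "(x, y) \<in> RL \<Longrightarrow> (y, z) \<in> RL \<Longrightarrow> (x, z) \<in> RL" using equiv_RL by (meson equiv_def transD)

lemma LM0:
  assumes mt: "more_than_two (L // RL)" and x: "x \<in> L" and y: "y \<in> L" and xy: "(x, y) \<in> RL"
  shows "induced L RL ` Ft ` T x \<subseteq> induced L RL ` Ft ` T y"
proof
  fix v assume "v \<in> induced L RL ` Ft ` T x"
  then obtain u where u: "u \<in> T x" and v: "v = induced L RL (Ft u)" by blast
  obtain z where z: "z \<in> L" "(x, z) \<notin> RL" using exists_out_gen[OF equiv_RL mt x] by blast
  have "Ft u z \<in> L - RL``{x}" using LM1b[OF x u] z by blast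
  then have d: "Ft u z \<in> L" "(x, Ft u z) \<notin> RL" by auto
  have yz: "(y, z) \<notin> RL" "(y, Ft u z) \<notin> RL" using z(2) d(2) xy RL_trans by blast+
  obtain u' where u': "u' \<in> T y" "Ft u' z = Ft u z" using LM1ex[OF y z(1) yz(1) d(1) yz(2)] by blast
  have "induced L RL (Ft u) = induced L RL (Ft u')"
    by (rule ind_eq[OF x y xy u u'(1) z]) (simp add: u'(2) RL_refl d(1))
  then show "v \<in> induced L RL ` Ft ` T y" using v u'(1) by blast
qed

lemma LM1'a:
  assumes x: "x \<in> L" and u: "u \<in> T x"
  shows "induced L RL (Ft u) (RL``{x}) = RL``{x} \<and>
     induced L RL (Ft u) ` (L // RL - {RL``{x}}) = L // RL - {RL``{x}}"
proof
  show i1: "induced L RL (Ft u) (RL``{x}) = RL``{x}"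
    using induced_class[OF equiv_RL UL_SymR[OF x u] x] LM1a[OF x u] by simp
  show "induced L RL (Ft u) ` (L // RL - {RL``{x}}) = L // RL - {RL``{x}}"
    by (rule bij_compl[OF induced_bij[OF equiv_RL UL_SymR[OF x u]]]) (use i1 x in \<open>auto intro: quotientI\<close>)
qed

lemma LM1'b:
  assumes x: "x \<in> L" and C: "C \<in> L // RL - {RL``{x}}" and D: "D \<in> L // RL - {RL``{x}}"
  shows "\<exists>!v. v \<in> induced L RL ` Ft ` T x \<and> v C = D"
proof -
  obtain c where c: "c \<in> L" "C = RL``{c}" using C by (auto simp: quotient_def)
  obtain d where d: "d \<in> L" "D = RL``{d}" using D by (auto simp: quotient_def)
  have xc: "(x, c) \<notin> RL" using C c equiv_class_eq[OF equiv_RL] by auto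
  have xd: "(x, d) \<notin> RL" using D d equiv_class_eq[OF equiv_RL] by auto
  obtain u where u: "u \<in> T x" "Ft u c = d" using LM1ex[OF x c(1) xc d(1) xd] by blast
  have v0: "induced L RL (Ft u) C = D"
    using induced_class[OF equiv_RL UL_SymR[OF x u(1)] c(1)] c(2) d(2) u(2) by simp
  show ?thesis
  proof (rule ex1I[of _ "induced L RL (Ft u)"])
    show "induced L RL (Ft u) \<in> induced L RL ` Ft ` T x \<and> induced L RL (Ft u) C = D"
      using u(1) v0 by blast
    fix v assume "v \<in> induced L RL ` Ft ` T x \<and> v C = D"
    then obtain u2 where u2: "u2 \<in> T x" "v = induced L RL (Ft u2)" "induced L RL (Ft u2) C = D" by blast
    have "RL``{Ft u2 c} = RL``{Ft u c}"
      using induced_class[OF equiv_RL UL_SymR[OF x u2(1)] c(1)] c(2) d(2) u(2) u2(3) by simp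
    then have "(Ft u2 c, Ft u c) \<in> RL"
      using eq_equiv_class_iff[OF equiv_RL Ft_L[OF T_Cp[OF x u2(1)] c(1)] Ft_L[OF T_Cp[OF x u(1)] c(1)]] by simp
    then show "v = induced L RL (Ft u)"
      using ind_eq[OF x x RL_refl[OF x] u2(1) u(1) c(1) xc] u2(2) by simp
  qed
qed

definition Gen where "Gen i = generate (BijGroup (X i)) (\<Union>a\<in>X i. U i a)"
definition GC where "GC = {h. h \<in> Cp \<and> (\<forall>i\<in>I. h i \<in> Gen i)}"

lemma U_sub: "i \<in> I \<Longrightarrow> (\<Union>a\<in>X i. U i a) \<subseteq> carrier (BijGroup (X i))"
  using lms_Bij[OF lmsI] by (auto simp: BijGroup_carrier)

lemma gen_repr:
  assumes "g \<in> generate (BijGroup L) (\<Union>x\<in>L. Ft ` T x)"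
  shows "\<exists>h\<in>GC. g = Ft h"
  using assms
proof (induction rule: generate.induct)
  case one
  have "tone \<in> GC" using tone_Cp generate.one[of "BijGroup (X _)"]
    by (auto simp: GC_def Gen_def tone_def BijGroup_one)
  then show ?case using Ft_one by metis
next
  case (incl h)
  then obtain x w where xw: "x \<in> L" "w \<in> T x" "h = Ft w" by blast
  have "w \<in> GC" unfolding GC_def Gen_def
    using T_Cp[OF xw(1,2)] T_D[OF xw(2)] L_D[OF xw(1)] by (blast intro: generate.incl)
  then show ?case using xw by blast
next
  case (inv h)
  then obtain x w where xw: "x \<in> L" "w \<in> T x" "h = Ft w" by blast
  have "tinv w \<in> GC" unfolding GC_def Gen_def
    using tinv_Cp[OF T_Cp[OF xw(1,2)]] T_D[OF xw(2)] L_D[OF xw(1)]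
    by (auto simp: tinv_def intro: generate.inv)
  then show ?case using xw Ft_Bij(2)[OF T_Cp[OF xw(1,2)]] by metis
next
  case (eng h1 h2)
  then obtain a b where ab: "a \<in> GC" "b \<in> GC" "h1 = Ft a" "h2 = Ft b" by blast
  have aC: "a \<in> Cp" "b \<in> Cp" using ab by (auto simp: GC_def)
  have "tmul a b \<in> GC" unfolding GC_def
  proof (intro CollectI conjI ballI)
    show "tmul a b \<in> Cp" by (rule tmul_Cp[OF aC])
    fix i assume i: "i \<in> I"
    have "tmul a b i = a i \<otimes>\<^bsub>BijGroup (X i)\<^esub> b i"
      using i BijGroup_mult[OF Cp_D[OF aC(1) i] Cp_D[OF aC(2) i]] by (simp add: tmul_def)
    moreover have "a i \<in> Gen i" "b i \<in> Gen i" using ab i by (auto simp: GC_def)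
    ultimately show "tmul a b i \<in> Gen i" unfolding Gen_def by (simp add: generate.eng)
  qed
  then show ?case using ab Ft_mult[OF aC] by metis
qed

lemma GC_tinv: assumes h: "h \<in> GC" shows "tinv h \<in> GC"
  unfolding GC_def
proof (intro CollectI conjI ballI)
  show "tinv h \<in> Cp" using tinv_Cp h by (auto simp: GC_def)
  fix i assume i: "i \<in> I"
  have "h i \<in> Gen i" using h i by (auto simp: GC_def)
  then show "tinv h i \<in> Gen i"
    using group.generate_m_inv_closed[OF group_BijGroup U_sub[OF i]] i by (simp add: tinv_def Gen_def)
qed

lemma conj_T:
  assumes h: "h \<in> GC" and x: "x \<in> L" and w: "w \<in> T x"
  shows "Ft h \<otimes>\<^bsub>BijGroup L\<^esub> Ft w \<otimes>\<^bsub>BijGroup L\<^esub> inv\<^bsub>BijGroup L\<^esub> (Ft h) \<in> Ft ` T (Ft h x)"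
proof -
  have hC: "h \<in> Cp" using h by (simp add: GC_def)
  have wC: "w \<in> Cp" by (rule T_Cp[OF x w])
  let ?w = "tmul (tmul h w) (tinv h)"
  have e: "Ft h \<otimes>\<^bsub>BijGroup L\<^esub> Ft w \<otimes>\<^bsub>BijGroup L\<^esub> inv\<^bsub>BijGroup L\<^esub> (Ft h) = Ft ?w"
    using Ft_mult[OF hC wC] Ft_Bij(2)[OF hC] Ft_mult[OF tmul_Cp[OF hC wC] tinv_Cp[OF hC]] by simp
  have "?w \<in> T (Ft h x)"
  proof (rule T_I)
    show "compat ?w" using Cp_D2[OF tmul_Cp[OF tmul_Cp[OF hC wC] tinv_Cp[OF hC]]] .
    show "?w \<in> extensional I" by (simp add: tmul_def)
    fix i assume i: "i \<in> I"
    have hB: "h i \<in> Bij (X i)" and wB: "w i \<in> Bij (X i)" using Cp_D hC wC i by auto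
    have "?w i = h i \<otimes>\<^bsub>BijGroup (X i)\<^esub> w i \<otimes>\<^bsub>BijGroup (X i)\<^esub> inv\<^bsub>BijGroup (X i)\<^esub> (h i)"
      using i BijGroup_mult[OF hB wB] BijGroup_mult[OF compose_Bij[OF hB wB] BijGroup_inv_Bij[OF hB]]
      by (simp add: tmul_def tinv_def)
    moreover have "h i \<otimes>\<^bsub>BijGroup (X i)\<^esub> w i \<otimes>\<^bsub>BijGroup (X i)\<^esub> inv\<^bsub>BijGroup (X i)\<^esub> (h i) \<in> U i (h i (x i))"
      using lms_conj[OF lmsI[OF i] L_D[OF x i] _ T_D[OF w i]] h i by (simp add: GC_def Gen_def)
    ultimately show "?w i \<in> U i (Ft h x i)" using Ft_app_i[OF x i] by simp
  qed
  then show ?thesis using e by simp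
qed

lemma LM2:
  assumes x: "x \<in> L" and g: "g \<in> generate (BijGroup L) (\<Union>y\<in>L. Ft ` T y)"
  shows "(\<lambda>u. g \<otimes>\<^bsub>BijGroup L\<^esub> u \<otimes>\<^bsub>BijGroup L\<^esub> inv\<^bsub>BijGroup L\<^esub> g) ` (Ft ` T x) = Ft ` T (g x)"
proof -
  obtain h where h: "h \<in> GC" "g = Ft h" using gen_repr[OF g] by blast
  have hC: "h \<in> Cp" using h by (simp add: GC_def)
  interpret G: group "BijGroup L" by (rule group_BijGroup)
  show ?thesis
  proof
    show "(\<lambda>u. g \<otimes>\<^bsub>BijGroup L\<^esub> u \<otimes>\<^bsub>BijGroup L\<^esub> inv\<^bsub>BijGroup L\<^esub> g) ` (Ft ` T x) \<subseteq> Ft ` T (g x)"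
      using conj_T[OF h(1) x] h(2) by blast
    show "Ft ` T (g x) \<subseteq> (\<lambda>u. g \<otimes>\<^bsub>BijGroup L\<^esub> u \<otimes>\<^bsub>BijGroup L\<^esub> inv\<^bsub>BijGroup L\<^esub> g) ` (Ft ` T x)"
    proof
      fix v assume "v \<in> Ft ` T (g x)"
      then obtain w' where w': "w' \<in> T (Ft h x)" "v = Ft w'" using h(2) by blast
      have x': "Ft h x \<in> L" by (rule Ft_L[OF hC x])
      have bk: "Ft (tinv h) (Ft h x) = x" by (rule Ft_tinv(2)[OF hC x])
      have "Ft (tinv h) \<otimes>\<^bsub>BijGroup L\<^esub> Ft w' \<otimes>\<^bsub>BijGroup L\<^esub> inv\<^bsub>BijGroup L\<^esub> (Ft (tinv h)) \<in> Ft ` T x"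
        using conj_T[OF GC_tinv[OF h(1)] x' w'(1)] bk by simp
      then obtain w where w: "w \<in> T x"
        "Ft w = Ft (tinv h) \<otimes>\<^bsub>BijGroup L\<^esub> Ft w' \<otimes>\<^bsub>BijGroup L\<^esub> inv\<^bsub>BijGroup L\<^esub> (Ft (tinv h))" by auto
      have gc: "g \<in> carrier (BijGroup L)" using Ft_Bij(1)[OF hC] h(2) by (simp add: BijGroup_carrier)
      have vc: "v \<in> carrier (BijGroup L)" using Ft_Bij(1)[OF T_Cp[OF x' w'(1)]] w'(2) by (simp add: BijGroup_carrier)
      have ti: "Ft (tinv h) = inv\<^bsub>BijGroup L\<^esub> g" using Ft_Bij(2)[OF hC] h(2) by simp
      have "Ft w = inv\<^bsub>BijGroup L\<^esub> g \<otimes>\<^bsub>BijGroup L\<^esub> v \<otimes>\<^bsub>BijGroup L\<^esub> g"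
        using w(2) ti w'(2) gc by simp
      then have "g \<otimes>\<^bsub>BijGroup L\<^esub> Ft w \<otimes>\<^bsub>BijGroup L\<^esub> inv\<^bsub>BijGroup L\<^esub> g = v"
        using G.conj_cancel[OF gc vc] by simp
      then show "v \<in> (\<lambda>u. g \<otimes>\<^bsub>BijGroup L\<^esub> u \<otimes>\<^bsub>BijGroup L\<^esub> inv\<^bsub>BijGroup L\<^esub> g) ` (Ft ` T x)"
        using w(1) by force
    qed
  qed
qed

end

context lim begin

definition ULf where "ULf x = Ft ` T x"

lemma lmsL2: "\<forall>x\<in>L. subgroup (ULf x) (BijGroup L) \<and> ULf x \<subseteq> SymR L RL"
  unfolding ULf_def using UL_subgroup UL_SymR by blast

lemma lmsL3: assumes mt: "more_than_two (L // RL)"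
  shows "\<forall>x\<in>L. \<forall>y\<in>L. (x, y) \<in> RL \<longrightarrow> induced L RL ` ULf x = induced L RL ` ULf y"
proof (intro ballI impI)
  fix x y assume "x \<in> L" "y \<in> L" "(x, y) \<in> RL"
  then show "induced L RL ` ULf x = induced L RL ` ULf y"
    unfolding ULf_def using LM0[OF mt] RL_sym by (meson subset_antisym)
qed

lemma lmsL4: "\<forall>x\<in>L. (\<forall>u\<in>ULf x. u x = x \<and> u ` (L - RL `` {x}) = L - RL `` {x}) \<and>
        (\<forall>y\<in>L - RL `` {x}. \<forall>z\<in>L - RL `` {x}. \<exists>!u. u \<in> ULf x \<and> u y = z)"
proof (rule ballI)
  fix x assume x: "x \<in> L"
  show "(\<forall>u\<in>ULf x. u x = x \<and> u ` (L - RL `` {x}) = L - RL `` {x}) \<and>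
        (\<forall>y\<in>L - RL `` {x}. \<forall>z\<in>L - RL `` {x}. \<exists>!u. u \<in> ULf x \<and> u y = z)"
  proof (rule conjI)
    show "\<forall>u\<in>ULf x. u x = x \<and> u ` (L - RL `` {x}) = L - RL `` {x}"
    proof (rule ballI)
      fix u assume "u \<in> ULf x"
      then obtain w where w: "w \<in> T x" "u = Ft w" by (auto simp: ULf_def)
      show "u x = x \<and> u ` (L - RL `` {x}) = L - RL `` {x}"
        using LM1a[OF x w(1)] LM1b[OF x w(1)] w(2) by simp
    qed
    show "\<forall>y\<in>L - RL `` {x}. \<forall>z\<in>L - RL `` {x}. \<exists>!u. u \<in> ULf x \<and> u y = z"
    proof (intro ballI)
      fix y z assume y: "y \<in> L - RL `` {x}" and z: "z \<in> L - RL `` {x}"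
      have y': "y \<in> L" "(x, y) \<notin> RL" and z': "z \<in> L" "(x, z) \<notin> RL" using y z by auto
      obtain w where w: "w \<in> T x" "Ft w y = z" using LM1ex[OF x y' z'] by blast
      show "\<exists>!u. u \<in> ULf x \<and> u y = z"
      proof (rule ex1I[of _ "Ft w"])
        show "Ft w \<in> ULf x \<and> Ft w y = z" using w by (auto simp: ULf_def)
        fix u assume "u \<in> ULf x \<and> u y = z"
        then obtain w2 where w2: "w2 \<in> T x" "u = Ft w2" "Ft w2 y = z" by (auto simp: ULf_def)
        have "w2 = w" by (rule Ft_inj[OF x y' w2(1) w(1)]) (simp add: w2(3) w(2))
        then show "u = Ft w" using w2(2) by simp
      qed
    qed
  qed
qed

lemma lmsL5a: "x \<in> L \<Longrightarrow> \<forall>v\<in>induced L RL ` ULf x. v (RL `` {x}) = RL `` {x} \<and>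
                 v ` (L // RL - {RL `` {x}}) = L // RL - {RL `` {x}}"
proof (rule ballI)
  fix v assume x: "x \<in> L" and "v \<in> induced L RL ` ULf x"
  then obtain w where w: "w \<in> T x" "v = induced L RL (Ft w)" by (auto simp: ULf_def)
  show "v (RL `` {x}) = RL `` {x} \<and> v ` (L // RL - {RL `` {x}}) = L // RL - {RL `` {x}}"
    unfolding w(2) by (rule LM1'a[OF x w(1)])
qed

lemma lmsL5b: "x \<in> L \<Longrightarrow> \<forall>C\<in>L // RL - {RL `` {x}}. \<forall>D\<in>L // RL - {RL `` {x}}.
            \<exists>!v. v \<in> induced L RL ` ULf x \<and> v C = D"
proof (intro ballI)
  fix C D assume x: "x \<in> L" and cd: "C \<in> L // RL - {RL `` {x}}" "D \<in> L // RL - {RL `` {x}}"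
  have "\<exists>!v. v \<in> induced L RL ` Ft ` T x \<and> v C = D" using LM1'b[OF x cd(1) cd(2)] .
  then show "\<exists>!v. v \<in> induced L RL ` ULf x \<and> v C = D" by (simp only: ULf_def)
qed

lemma lmsL5: "\<forall>x\<in>L. (\<forall>v\<in>induced L RL ` ULf x. v (RL `` {x}) = RL `` {x} \<and>
                 v ` (L // RL - {RL `` {x}}) = L // RL - {RL `` {x}}) \<and>
        (\<forall>C\<in>L // RL - {RL `` {x}}. \<forall>D\<in>L // RL - {RL `` {x}}.
            \<exists>!v. v \<in> induced L RL ` ULf x \<and> v C = D)"
  apply (rule ballI)
  apply (rule conjI)
   apply (erule lmsL5a)
  apply (erule lmsL5b)
  done

lemma lmsL6: "\<forall>x\<in>L. \<forall>g\<in>generate (BijGroup L) (\<Union>y\<in>L. ULf y).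
        (\<lambda>u. g \<otimes>\<^bsub>BijGroup L\<^esub> u \<otimes>\<^bsub>BijGroup L\<^esub> inv\<^bsub>BijGroup L\<^esub> g) ` ULf x = ULf (g x)"
proof (intro ballI)
  fix x g assume x: "x \<in> L" and g: "g \<in> generate (BijGroup L) (\<Union>y\<in>L. ULf y)"
  have g': "g \<in> generate (BijGroup L) (\<Union>y\<in>L. Ft ` T y)" using g by (simp only: ULf_def)
  have "(\<lambda>u. g \<otimes>\<^bsub>BijGroup L\<^esub> u \<otimes>\<^bsub>BijGroup L\<^esub> inv\<^bsub>BijGroup L\<^esub> g) ` (Ft ` T x) = Ft ` T (g x)"
    by (rule LM2[OF x g'])
  then show "(\<lambda>u. g \<otimes>\<^bsub>BijGroup L\<^esub> u \<otimes>\<^bsub>BijGroup L\<^esub> inv\<^bsub>BijGroup L\<^esub> g) ` ULf x = ULf (g x)"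
    by (simp only: ULf_def)
qed

lemma lms_L:
  assumes mt: "more_than_two (L // RL)"
  shows "local_moufang_set L RL ULf"
  using equiv_RL mt lmsL2 lmsL3[OF mt] lmsL4 lmsL5 lmsL6 unfolding local_moufang_set_def
  by (intro conjI) assumption+

abbreviation "P \<equiv> lim_proj I ge X \<phi>"

lemma proj_hom: assumes j: "j \<in> I"
  shows "lms_hom L RL ULf (X j) (R j) (U j) (P j)"
  unfolding lms_hom_def
proof (intro conjI ballI)
  show "P j \<in> L \<rightarrow>\<^sub>E X j" using L_D j by (auto simp: lim_proj_def)
  fix x assume x: "x \<in> L"
  {
    fix x' assume x': "x' \<in> L"
    show "(x, x') \<in> RL \<longleftrightarrow> (P j x, P j x') \<in> R j"
      using RL_iff part1[OF x x' j] j x x' by (auto simp: lim_proj_def)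
  }
  fix u assume "u \<in> ULf x"
  then obtain w where w: "w \<in> T x" "u = Ft w" by (auto simp: ULf_def)
  show "\<exists>v\<in>U j (P j x). \<forall>y\<in>L. P j (u y) = v (P j y)"
  proof (rule bexI[of _ "w j"])
    show "w j \<in> U j (P j x)" using T_D[OF w(1) j] x by (simp add: lim_proj_def)
    show "\<forall>y\<in>L. P j (u y) = w j (P j y)"
      using Ft_L[OF T_Cp[OF x w(1)]] Ft_app_i j w(2) by (simp add: lim_proj_def)
  qed
qed

lemma proj_compose: "i \<in> I \<Longrightarrow> j \<in> I \<Longrightarrow> ge i j \<Longrightarrow> compose L (\<phi> i j) (P i) = P j"
  by (rule ext) (simp add: compose_def lim_proj_def L_D2)

lemma universal:
  fixes Y :: "'c set" and S V and q :: "'i \<Rightarrow> 'c \<Rightarrow> 'a"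
  assumes lY: "local_moufang_set Y S V"
    and qh: "\<forall>i\<in>I. lms_hom Y S V (X i) (R i) (U i) (q i)"
    and qc: "\<forall>i\<in>I. \<forall>j\<in>I. ge i j \<longrightarrow> compose Y (\<phi> i j) (q i) = q j"
  shows "\<exists>!\<psi>. lms_hom Y S V L RL ULf \<psi> \<and> (\<forall>i\<in>I. compose Y (P i) \<psi> = q i)"
proof -
  have qf: "\<And>i. i \<in> I \<Longrightarrow> q i \<in> Y \<rightarrow>\<^sub>E X i" using qh by (simp add: lms_hom_def)
  have qmem: "\<And>i y. i \<in> I \<Longrightarrow> y \<in> Y \<Longrightarrow> q i y \<in> X i" using qf by blast
  have qext: "\<And>i y. i \<in> I \<Longrightarrow> y \<notin> Y \<Longrightarrow> q i y = undefined" using qf by (auto simp: PiE_def extensional_def)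
  have qR: "\<And>i y y'. i \<in> I \<Longrightarrow> y \<in> Y \<Longrightarrow> y' \<in> Y \<Longrightarrow> (y, y') \<in> S \<longleftrightarrow> (q i y, q i y') \<in> R i"
    using qh unfolding lms_hom_def by blast
  have qU: "\<And>i y u. i \<in> I \<Longrightarrow> y \<in> Y \<Longrightarrow> u \<in> V y \<Longrightarrow> \<exists>v\<in>U i (q i y). \<forall>z\<in>Y. q i (u z) = v (q i z)"
    using qh unfolding lms_hom_def by blast
  have qphi: "\<And>i j y. i \<in> I \<Longrightarrow> j \<in> I \<Longrightarrow> ge i j \<Longrightarrow> y \<in> Y \<Longrightarrow> \<phi> i j (q i y) = q j y"
  proof -
    fix i j y assume a: "i \<in> I" "j \<in> I" "ge i j" "y \<in> Y"
    have "compose Y (\<phi> i j) (q i) y = q j y" using qc a by simp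
    then show "\<phi> i j (q i y) = q j y" using a(4) by (simp add: compose_def)
  qed
  define \<psi> where "\<psi> = (\<lambda>y\<in>Y. \<lambda>i\<in>I. q i y)"
  have \<psi>L: "\<And>y. y \<in> Y \<Longrightarrow> \<psi> y \<in> L"
    by (rule L_I) (auto simp: \<psi>_def qmem qphi)
  have \<psi>i: "\<And>y i. y \<in> Y \<Longrightarrow> i \<in> I \<Longrightarrow> \<psi> y i = q i y" by (simp add: \<psi>_def)
  have hom: "lms_hom Y S V L RL ULf \<psi>"
    unfolding lms_hom_def
  proof (intro conjI ballI)
    show "\<psi> \<in> Y \<rightarrow>\<^sub>E L" using \<psi>L by (auto simp: \<psi>_def)
    fix y assume y: "y \<in> Y"
    {
      fix y' assume y': "y' \<in> Y"
      obtain i0 where i0: "i0 \<in> I" using I_ne by blast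
      show "(y, y') \<in> S \<longleftrightarrow> (\<psi> y, \<psi> y') \<in> RL"
        using RL_iff \<psi>L y y' \<psi>i qR i0 by (metis (no_types, lifting))
    }
    fix u assume u: "u \<in> V y"
    have uB: "u \<in> Bij Y" by (rule lms_Bij[OF lY y u])
    obtain z0 where z0: "z0 \<in> Y" "(y, z0) \<notin> S"
      using exists_out_gen[OF lms_equiv[OF lY] _ y] lY by (auto simp: local_moufang_set_def)
    define w where "w = (\<lambda>i\<in>I. SOME v. v \<in> U i (q i y) \<and> (\<forall>z\<in>Y. q i (u z) = v (q i z)))"
    have w: "\<And>i. i \<in> I \<Longrightarrow> w i \<in> U i (q i y) \<and> (\<forall>z\<in>Y. q i (u z) = w i (q i z))"
    proof -
      fix i assume i: "i \<in> I"
      have ex: "\<exists>v. v \<in> U i (q i y) \<and> (\<forall>z\<in>Y. q i (u z) = v (q i z))" using qU[OF i y u] by blast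
      have e: "w i = (SOME v. v \<in> U i (q i y) \<and> (\<forall>z\<in>Y. q i (u z) = v (q i z)))" using i by (simp add: w_def)
      show "w i \<in> U i (q i y) \<and> (\<forall>z\<in>Y. q i (u z) = w i (q i z))" unfolding e by (rule someI_ex[OF ex])
    qed
    have c: "compat w" unfolding compat_def
    proof (intro ballI impI)
      fix i j a assume ij: "i \<in> I" "j \<in> I" "ge i j" and a: "a \<in> X i"
      obtain v where v: "v \<in> U j (\<phi> i j (q i y))" "\<forall>b\<in>X i. \<phi> i j (w i b) = v (\<phi> i j b)"
        using phi_U[OF ij qmem[OF ij(1) y] conjunct1[OF w[OF ij(1)]]] by blast
      have v2: "v \<in> U j (q j y)" using v(1) qphi[OF ij y] by simp
      have uz: "u z0 \<in> Y" using Bij_app[OF uB z0(1)] .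
      have "v (q j z0) = \<phi> i j (w i (q i z0))" using v(2) qmem[OF ij(1) z0(1)] qphi[OF ij z0(1)] by metis
      also have "\<dots> = \<phi> i j (q i (u z0))" using w[OF ij(1)] z0(1) by simp
      also have "\<dots> = q j (u z0)" using qphi[OF ij uz] .
      also have "\<dots> = w j (q j z0)" using w[OF ij(2)] z0(1) by simp
      finally have vz: "v (q j z0) = w j (q j z0)" .
      have "(q j y, q j z0) \<notin> R j" using qR[OF ij(2) y z0(1)] z0(2) by simp
      then have "v = w j"
        using lms_unique[OF lmsI[OF ij(2)] qmem[OF ij(2) y] v2 conjunct1[OF w[OF ij(2)]] qmem[OF ij(2) z0(1)]] vz
        by simp
      then show "\<phi> i j (w i a) = w j (\<phi> i j a)" using v(2) a by simp
    qed
    have wT: "w \<in> T (\<psi> y)"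
    proof (rule T_I)
      fix i assume i: "i \<in> I"
      show "w i \<in> U i (\<psi> y i)" using conjunct1[OF w[OF i]] \<psi>i[OF y i] by simp
    next
      show "w \<in> extensional I" unfolding w_def by (rule restrict_extensional)
    next
      show "compat w" by (rule c)
    qed
    show "\<exists>v\<in>ULf (\<psi> y). \<forall>z\<in>Y. \<psi> (u z) = v (\<psi> z)"
    proof (rule bexI[of _ "Ft w"])
      show "Ft w \<in> ULf (\<psi> y)" using wT by (auto simp: ULf_def)
      show "\<forall>z\<in>Y. \<psi> (u z) = Ft w (\<psi> z)"
      proof
        fix z assume z: "z \<in> Y"
        have uz: "u z \<in> Y" using Bij_app[OF uB z] .
        show "\<psi> (u z) = Ft w (\<psi> z)"
          by (rule L_eqI[OF \<psi>L[OF uz] Ft_L[OF T_Cp[OF \<psi>L[OF y] wT] \<psi>L[OF z]]])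
             (simp add: \<psi>i uz z Ft_app_i[OF \<psi>L[OF z]] w)
      qed
    qed
  qed
  have comp: "\<forall>i\<in>I. compose Y (P i) \<psi> = q i"
  proof
    fix i assume i: "i \<in> I"
    show "compose Y (P i) \<psi> = q i"
    proof (rule ext)
      fix y show "compose Y (P i) \<psi> y = q i y"
        by (cases "y \<in> Y") (simp_all add: compose_def lim_proj_def \<psi>L \<psi>i i qext)
    qed
  qed
  show ?thesis
  proof (rule ex1I[of _ \<psi>])
    show "lms_hom Y S V L RL ULf \<psi> \<and> (\<forall>i\<in>I. compose Y (P i) \<psi> = q i)" using hom comp by blast
    fix \<psi>' assume a: "lms_hom Y S V L RL ULf \<psi>' \<and> (\<forall>i\<in>I. compose Y (P i) \<psi>' = q i)"
    have f: "\<psi>' \<in> Y \<rightarrow>\<^sub>E L" using a by (simp add: lms_hom_def)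
    show "\<psi>' = \<psi>"
    proof (rule ext)
      fix y show "\<psi>' y = \<psi> y"
      proof (cases "y \<in> Y")
        case True
        have yL: "\<psi>' y \<in> L" using f True by blast
        show ?thesis
        proof (rule L_eqI[OF yL \<psi>L[OF True]])
          fix i assume i: "i \<in> I"
          have "compose Y (P i) \<psi>' y = q i y" using a i by simp
          then show "\<psi>' y i = \<psi> y i" using True yL \<psi>i i by (simp add: compose_def lim_proj_def)
        qed
      next
        case False then show ?thesis using f by (auto simp: \<psi>_def PiE_def extensional_def)
      qed
    qed
  qed
qed

end

theorem mainTheorem12:
  fixes I :: "'i set" and ge :: "'i \<Rightarrow> 'i \<Rightarrow> bool"
    and X :: "'i \<Rightarrow> 'a set" and R :: "'i \<Rightarrow> ('a \<times> 'a) set"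
    and U :: "'i \<Rightarrow> 'a \<Rightarrow> ('a \<Rightarrow> 'a) set" and \<phi> :: "'i \<Rightarrow> 'i \<Rightarrow> 'a \<Rightarrow> 'a"
  assumes sys: "inverse_system I ge X R U \<phi>"
  defines "L \<equiv> lim_set I ge X \<phi>"
    and "RL \<equiv> lim_rel I ge X R \<phi>"
    and "UL \<equiv> lim_root_group I ge X U \<phi>"
    and "p \<equiv> lim_proj I ge X \<phi>"
  shows "(\<forall>x\<in>L. \<forall>y\<in>L. (\<exists>i\<in>I. (x i, y i) \<in> R i) \<longleftrightarrow> (\<forall>i\<in>I. (x i, y i) \<in> R i))
    \<and> equiv L RL
    \<and> (more_than_two (L // RL) \<longrightarrow>
        local_moufang_set L RL UL
        \<and> (\<forall>j\<in>I. lms_hom L RL UL (X j) (R j) (U j) (p j))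
        \<and> (\<forall>i\<in>I. \<forall>j\<in>I. ge i j \<longrightarrow> compose L (\<phi> i j) (p i) = p j)
        \<and> (\<forall>(Y :: 'c set) S V q.
              local_moufang_set Y S V
              \<and> (\<forall>i\<in>I. lms_hom Y S V (X i) (R i) (U i) (q i))
              \<and> (\<forall>i\<in>I. \<forall>j\<in>I. ge i j \<longrightarrow> compose Y (\<phi> i j) (q i) = q j)
              \<longrightarrow> (\<exists>!\<psi>. lms_hom Y S V L RL UL \<psi> \<and> (\<forall>i\<in>I. compose Y (p i) \<psi> = q i))))"
proof -
  interpret lim I ge X R U \<phi> by (rule lim.intro[OF sys])
  have ULe: "UL = ULf" unfolding UL_def using UL_eq by (intro ext) (simp add: ULf_def)
  have p1: "\<forall>x\<in>L. \<forall>y\<in>L. (\<exists>i\<in>I. (x i, y i) \<in> R i) \<longleftrightarrow> (\<forall>i\<in>I. (x i, y i) \<in> R i)"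
    unfolding L_def using part1 I_ne by blast
  show ?thesis
  proof (intro conjI)
    show "\<forall>x\<in>L. \<forall>y\<in>L. (\<exists>i\<in>I. (x i, y i) \<in> R i) \<longleftrightarrow> (\<forall>i\<in>I. (x i, y i) \<in> R i)" by (rule p1)
    show "equiv L RL" unfolding L_def RL_def by (rule equiv_RL)
    show "more_than_two (L // RL) \<longrightarrow>
        local_moufang_set L RL UL
        \<and> (\<forall>j\<in>I. lms_hom L RL UL (X j) (R j) (U j) (p j))
        \<and> (\<forall>i\<in>I. \<forall>j\<in>I. ge i j \<longrightarrow> compose L (\<phi> i j) (p i) = p j)
        \<and> (\<forall>(Y :: 'c set) S V q.
              local_moufang_set Y S V
              \<and> (\<forall>i\<in>I. lms_hom Y S V (X i) (R i) (U i) (q i))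
              \<and> (\<forall>i\<in>I. \<forall>j\<in>I. ge i j \<longrightarrow> compose Y (\<phi> i j) (q i) = q j)
              \<longrightarrow> (\<exists>!\<psi>. lms_hom Y S V L RL UL \<psi> \<and> (\<forall>i\<in>I. compose Y (p i) \<psi> = q i)))"
    proof (rule impI)
      assume mt: "more_than_two (L // RL)"
      have mt': "more_than_two (lim_set I ge X \<phi> // lim_rel I ge X R \<phi>)" using mt by (simp only: L_def RL_def)
      show "local_moufang_set L RL UL
        \<and> (\<forall>j\<in>I. lms_hom L RL UL (X j) (R j) (U j) (p j))
        \<and> (\<forall>i\<in>I. \<forall>j\<in>I. ge i j \<longrightarrow> compose L (\<phi> i j) (p i) = p j)
        \<and> (\<forall>(Y :: 'c set) S V q.
              local_moufang_set Y S V
              \<and> (\<forall>i\<in>I. lms_hom Y S V (X i) (R i) (U i) (q i))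
              \<and> (\<forall>i\<in>I. \<forall>j\<in>I. ge i j \<longrightarrow> compose Y (\<phi> i j) (q i) = q j)
              \<longrightarrow> (\<exists>!\<psi>. lms_hom Y S V L RL UL \<psi> \<and> (\<forall>i\<in>I. compose Y (p i) \<psi> = q i)))"
      proof (intro conjI)
        show "local_moufang_set L RL UL" unfolding L_def RL_def ULe by (rule lms_L[OF mt'])
        show "\<forall>j\<in>I. lms_hom L RL UL (X j) (R j) (U j) (p j)"
          unfolding L_def RL_def ULe p_def using proj_hom by (rule ballI)
        show "\<forall>i\<in>I. \<forall>j\<in>I. ge i j \<longrightarrow> compose L (\<phi> i j) (p i) = p j"
          unfolding L_def p_def using proj_compose by blast
        show "\<forall>(Y :: 'c set) S V q.
              local_moufang_set Y S V
              \<and> (\<forall>i\<in>I. lms_hom Y S V (X i) (R i) (U i) (q i))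
              \<and> (\<forall>i\<in>I. \<forall>j\<in>I. ge i j \<longrightarrow> compose Y (\<phi> i j) (q i) = q j)
              \<longrightarrow> (\<exists>!\<psi>. lms_hom Y S V L RL UL \<psi> \<and> (\<forall>i\<in>I. compose Y (p i) \<psi> = q i))"
        proof (intro allI impI)
          fix Y :: "'c set" and S V q
          assume a: "local_moufang_set Y S V
              \<and> (\<forall>i\<in>I. lms_hom Y S V (X i) (R i) (U i) (q i))
              \<and> (\<forall>i\<in>I. \<forall>j\<in>I. ge i j \<longrightarrow> compose Y (\<phi> i j) (q i) = q j)"
          have "\<exists>!\<psi>. lms_hom Y S V (lim_set I ge X \<phi>) (lim_rel I ge X R \<phi>) ULf \<psi> \<and>
                 (\<forall>i\<in>I. compose Y (lim_proj I ge X \<phi> i) \<psi> = q i)"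
            by (rule universal[OF conjunct1[OF a] conjunct1[OF conjunct2[OF a]] conjunct2[OF conjunct2[OF a]]])
          then show "\<exists>!\<psi>. lms_hom Y S V L RL UL \<psi> \<and> (\<forall>i\<in>I. compose Y (p i) \<psi> = q i)"
            unfolding L_def RL_def ULe p_def .
        qed
      qed
    qed
  qed
qed

end
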